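(* Let $d \geq 3$. Then the morphism \[\mathbb{P}^1\times\mathbb{P}^1 \to \mathbb{P}^4,\quad [x_0:x_1]\times[y_0:y_1] \mapsto \Big[x_0y_0^d : d x_0y_0^{d-1}y_1 + x_1y_0^d : \tbinom{d}{2}x_0y_0^{d-2}y_1^2 + d x_1y_0^{d-1}y_1 : x_0y_1^d + d x_1y_0y_1^{d-1} : x_1y_1^d\Big]\] is injective. In particular, $\operatorname{injdim}(\mathbb{P}^1\times\mathbb{P}^1,\mathcal{O}(1,d)) \leq 4$.
   Context: Over $\mathbb{C}$. For a line bundle $\mathscr{L}$ on a projective variety $X$ and a nonzero subspace $V \subseteq H^0(X,\mathscr{L})$, $\varphi_V \colon X \dashrightarrow \mathbb{P}(V^* )$ is the rational map given by the sections in $V$; $\operatorname{injdim}(X,\mathscr{L}) := \inf\{\dim V - 1 : \varphi_V \text{ is an injective morphism}\}$. *)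

theory Defs
  imports Complex_Main
begin

text \<open>Points of projective space P^n over C are represented by nonzero coordinate
vectors (lists of length n+1); two vectors represent the same point iff they are
proportional by a nonzero scalar.\<close>

definition proj_eq :: "complex list \<Rightarrow> complex list \<Rightarrow> bool" where
  "proj_eq u v \<longleftrightarrow> (\<exists>c. c \<noteq> 0 \<and> v = map (\<lambda>t. c * t) u)"

definition nonzero_vec :: "complex list \<Rightarrow> bool" where
  "nonzero_vec u \<longleftrightarrow> (\<exists>t \<in> set u. t \<noteq> 0)"

definition phi_map :: "nat \<Rightarrow> complex list \<Rightarrow> complex list \<Rightarrow> complex list" where
  "phi_map d x y =
    (let x0 = x ! 0; x1 = x ! 1; y0 = y ! 0; y1 = y ! 1 in
     [ x0 * y0 ^ d,
       of_nat d * x0 * y0 ^ (d - 1) * y1 + x1 * y0 ^ d,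
       of_nat (d choose 2) * x0 * y0 ^ (d - 2) * y1 ^ 2 + of_nat d * x1 * y0 ^ (d - 1) * y1,
       x0 * y1 ^ d + of_nat d * x1 * y0 * y1 ^ (d - 1),
       x1 * y1 ^ d ])"

end

theory Submission
  imports Defs
begin

lemma key:
  fixes a b a' b' u u' k D C P P' :: complex
  assumes C: "2*C = D*(D-1)" and D: "D \<noteq> 0" "D*D - 1 \<noteq> 0" and k: "k \<noteq> 0"
    and ab: "a \<noteq> 0 \<or> b \<noteq> 0" and P: "P \<noteq> 0" "P' \<noteq> 0"
    and e0: "a' = k*a"
    and e1: "D*a'*u' + b' = k*(D*a*u + b)"
    and e2: "C*a'*u'^2 + D*b'*u' = k*(C*a*u^2 + D*b*u)"
    and e3: "a'*u'*P' + D*b'*P' = k*(a*u*P + D*b*P)"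
    and e4: "b'*u'*P' = k*(b*u*P)"
  shows "u = u'"
proof (rule ccontr)
  assume ne: "u \<noteq> u'"
  have b': "b' = k*(b + D*a*(u-u'))" using e0 e1 by (simp add: algebra_simps)
  have i1: "2*(C*a'*u'^2 + D*b'*u') - 2*(k*(C*a*u^2 + D*b*u))
      = k*((u'-u)*((2*C)*a*(u'+u) + 2*D*b - 2*D*D*a*u'))"
    unfolding e0 b' by (simp add: algebra_simps power2_eq_square)
  have i2: "(2*C)*a*(u'+u) + 2*D*b - 2*D*D*a*u' = D*(2*b - a*((D+1)*u' - (D-1)*u))"
    unfolding C by (simp add: algebra_simps)
  have "k*((u'-u)*(D*(2*b - a*((D+1)*u' - (D-1)*u)))) = 0" using i1 i2 e2 by simp
  hence b2: "2*b = a*((D+1)*u' - (D-1)*u)" using ne D(1) k by simp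
  have a: "a \<noteq> 0" using ab b2 by auto
  define X where "X = (D+1)*u - (D-1)*u'"
  define Y where "Y = (D+1)*u' - (D-1)*u"
  have aY: "a*Y = 2*b" unfolding Y_def using b2 by simp
  have aX: "a*X = 2*b + 2*D*a*(u-u')"
  proof -
    have "a*X = a*Y + 2*D*a*(u-u')" unfolding X_def Y_def by (simp add: algebra_simps)
    thus ?thesis using aY by simp
  qed
  have f1: "X*u'*P' = Y*u*P"
  proof -
    have "k*((2*b + 2*D*a*(u-u'))*u'*P' - (2*b)*u*P) = 2*(b'*u'*P') - 2*(k*(b*u*P))"
      unfolding b' by (simp add: algebra_simps)
    also have "\<dots> = 0" using e4 by simp
    finally have "k*((a*X)*u'*P' - (a*Y)*u*P) = 0" unfolding aX aY .
    hence "k*a*(X*u'*P' - Y*u*P) = 0" by (simp add: algebra_simps)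
    thus ?thesis using k a by simp
  qed
  have f2: "(2*u' + D*X)*P' = (2*u + D*Y)*P"
  proof -
    have "k*((2*a*u' + D*(2*b + 2*D*a*(u-u')))*P' - (2*a*u + D*(2*b))*P)
       = 2*(a'*u'*P' + D*b'*P') - 2*(k*(a*u*P + D*b*P))"
      unfolding e0 b' by (simp add: algebra_simps)
    also have "\<dots> = 0" using e3 by simp
    finally have "k*((2*a*u' + D*(a*X))*P' - (2*a*u + D*(a*Y))*P) = 0" unfolding aX aY .
    hence "k*a*((2*u' + D*X)*P' - (2*u + D*Y)*P) = 0" by (simp add: algebra_simps)
    thus ?thesis using k a by simp
  qed
  have "(X*u'*(2*u + D*Y) - Y*u*(2*u' + D*X)) * (P*P') = 0"
  proof -
    have "X*u'*P' * ((2*u + D*Y)*P) = Y*u*P * ((2*u' + D*X)*P')" using f1 f2 by simp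
    thus ?thesis by (simp add: algebra_simps)
  qed
  moreover have "X*u'*(2*u + D*Y) - Y*u*(2*u' + D*X) = D*(D*D-1)*(u-u')^3"
    unfolding X_def Y_def by (simp add: algebra_simps power3_eq_cube)
  ultimately have "D*(D*D-1)*(u-u')^3 * (P*P') = 0" by metis
  thus False using D P ne by simp
qed

lemma choose2_c: "2 * (of_nat (d choose 2)::complex) = of_nat d * (of_nat d - 1)"
proof (cases d)
  case 0 then show ?thesis by simp
next
  case (Suc m)
  have "2 * (Suc m choose 2) = Suc m * m" by (simp add: choose_two) 
  hence "(of_nat (2 * (Suc m choose 2))::complex) = of_nat (Suc m * m)" by metis
  thus ?thesis using Suc by (simp add: algebra_simps)
qed

lemma nz2: "nonzero_vec [a,b] \<longleftrightarrow> a \<noteq> 0 \<or> b \<noteq> 0" by (auto simp: nonzero_vec_def)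

lemma pe2: "k \<noteq> 0 \<Longrightarrow> a' = k*a \<Longrightarrow> b' = k*b \<Longrightarrow> proj_eq [a,b] [a',b']"
  by (auto simp: proj_eq_def)

lemma canc_helper:
  fixes A B S S' L R c k :: complex
  assumes "A = c*B" "A = S'*L" "B = S*R" "c*S = k*S'" "S' \<noteq> 0"
  shows "L = k*R"
proof -
  have "S'*L = S'*(k*R)" using assms(1-4) by (metis mult.assoc mult.commute)
  thus ?thesis using assms(5) by simp
qed

lemma scalar_inj:
  fixes a b s t a' b' s' t' c :: complex
  assumes d: "d \<ge> 3" and x: "a \<noteq> 0 \<or> b \<noteq> 0" and y: "s \<noteq> 0 \<or> t \<noteq> 0"
    and x': "a' \<noteq> 0 \<or> b' \<noteq> 0" and y': "s' \<noteq> 0 \<or> t' \<noteq> 0" and c: "c \<noteq> 0"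
    and h: "phi_map d [a',b'] [s',t'] = map (\<lambda>z. c*z) (phi_map d [a,b] [s,t])"
  shows "proj_eq [a,b] [a',b'] \<and> proj_eq [s,t] [s',t']"
proof -
  obtain m where dm: "d = Suc (Suc (Suc m))" using le_Suc_ex[OF d] by (metis add_Suc numeral_3_eq_3 plus_nat.add_0)
  define D where "D = (of_nat d :: complex)"
  define C where "C = (of_nat (d choose 2) :: complex)"
  have q0: "a'*s'^d = c*(a*s^d)"
    and q1: "D*a'*s'^(d-1)*t' + b'*s'^d = c*(D*a*s^(d-1)*t + b*s^d)"
    and q2: "C*a'*s'^(d-2)*t'^2 + D*b'*s'^(d-1)*t' = c*(C*a*s^(d-2)*t^2 + D*b*s^(d-1)*t)"
    and q3: "a'*t'^d + D*b'*s'*t'^(d-1) = c*(a*t^d + D*b*s*t^(d-1))"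
    and q4: "b'*t'^d = c*(b*t^d)"
    using h by (simp_all add: phi_map_def Let_def D_def C_def)
  have D0: "D \<noteq> 0" "D*D - 1 \<noteq> 0" unfolding D_def using d
  proof -
    have "d*d \<noteq> 1" using d by simp
    hence "(of_nat (d*d)::complex) \<noteq> of_nat 1" by (metis of_nat_eq_iff)
    thus "of_nat d \<noteq> (0::complex)" "(of_nat d::complex) * of_nat d - 1 \<noteq> 0" using d by simp_all
  qed
  have C2: "2*C = D*(D-1)" unfolding C_def D_def by (rule choose2_c)
  have pw1: "z^d = z^(d-1)*z" for z :: complex using dm by (simp add: power_Suc2[symmetric] del: power_Suc)
  have pw2: "z^(d-1) = z^(d-2)*z" for z :: complex using dm by (simp add: power_Suc2[symmetric] del: power_Suc)
  show ?thesis
  proof (cases "s = 0")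
    case True
    then have t: "t \<noteq> 0" using y by simp
    have s': "s' = 0"
    proof (rule ccontr)
      assume "s' \<noteq> 0"
      moreover have "a'*s'^d = 0" using q0 True dm by simp
      ultimately have "a' = 0" by simp
      moreover have "D*a'*s'^(d-1)*t' + b'*s'^d = 0" using q1 True dm by simp
      ultimately show False using x' \<open>s' \<noteq> 0\<close> by simp
    qed
    then have t': "t' \<noteq> 0" using y' by simp
    have "a'*t'^d = c*(a*t^d)" "b'*t'^d = c*(b*t^d)" using q3 q4 True s' dm by simp_all
    define k where "k = c*t^d/t'^d"
    have "a' = k*a" "b' = k*b" using \<open>a'*t'^d = c*(a*t^d)\<close> \<open>b'*t'^d = c*(b*t^d)\<close> t'
      unfolding k_def by (simp_all add: field_simps)
    moreover have "k \<noteq> 0" unfolding k_def using c t t' by simp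
    moreover have "s' = (t'/t)*s" "t' = (t'/t)*t" using True s' t by simp_all
    moreover have "t'/t \<noteq> 0" using t t' by simp
    ultimately show ?thesis using pe2 by metis
  next
    case s: False
    show ?thesis
    proof (cases "t = 0")
      case True
      have t': "t' = 0"
      proof (rule ccontr)
        assume "t' \<noteq> 0"
        moreover have "b'*t'^d = 0" using q4 True dm by simp
        ultimately have "b' = 0" by simp
        moreover have "a'*t'^d + D*b'*s'*t'^(d-1) = 0" using q3 True dm by simp
        ultimately show False using x' \<open>t' \<noteq> 0\<close> by simp
      qed
      then have s': "s' \<noteq> 0" using y' by simp
      have "a'*s'^d = c*(a*s^d)" "b'*s'^d = c*(b*s^d)" using q0 q1 True t' dm by simp_all
      define k where "k = c*s^d/s'^d"
      have "a' = k*a" "b' = k*b" using \<open>a'*s'^d = c*(a*s^d)\<close> \<open>b'*s'^d = c*(b*s^d)\<close> s'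
        unfolding k_def by (simp_all add: field_simps)
      moreover have "k \<noteq> 0" unfolding k_def using c s s' by simp
      moreover have "s' = (s'/s)*s" "t' = (s'/s)*t" using True t' s by simp_all
      moreover have "s'/s \<noteq> 0" using s s' by simp
      ultimately show ?thesis using pe2 by metis
    next
      case t: False
      have s': "s' \<noteq> 0"
      proof
        assume s'0: "s' = 0"
        have "c*(a*s^d) = 0" using q0 s'0 dm by simp
        hence "a = 0" using c s by simp
        moreover have "c*(D*a*s^(d-1)*t + b*s^d) = 0" using q1 s'0 dm by simp
        ultimately show False using x c s by simp
      qed
      have t': "t' \<noteq> 0"
      proof
        assume t'0: "t' = 0"
        have "c*(b*t^d) = 0" using q4 t'0 dm by simp
        hence "b = 0" using c t by simp
        moreover have "c*(a*t^d + D*b*s*t^(d-1)) = 0" using q3 t'0 dm by simp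
        ultimately show False using x c t by simp
      qed
      define u where "u = t/s"
      define u' where "u' = t'/s'"
      have tu: "t = s*u" using s unfolding u_def by simp
      have tu': "t' = s'*u'" using s' unfolding u'_def by simp
      have u: "u \<noteq> 0" using t tu by auto
      have u': "u' \<noteq> 0" using t' tu' by auto
      define k where "k = c*s^d/s'^d"
      have ks: "c*s^d = k*s'^d" unfolding k_def using s' by simp
      have k: "k \<noteq> 0" unfolding k_def using c s s' by simp
      have sd: "s'^d \<noteq> 0" using s' by simp
      have e0: "a' = k*a"
      proof -
        have "s'^d * a' = s'^d * (k*a)" using q0 by (simp add: ks[symmetric] algebra_simps)
        thus ?thesis using sd s' by simp
      qed
      have e1: "D*a'*u' + b' = k*(D*a*u + b)"
      proof -
        have l: "D*a'*s'^(d-1)*t' + b'*s'^d = s'^d*(D*a'*u'+b')"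
          unfolding tu' pw1[of s'] by (simp add: algebra_simps)
        have r: "D*a*s^(d-1)*t + b*s^d = s^d*(D*a*u+b)"
          unfolding tu pw1[of s] by (simp add: algebra_simps)
        show ?thesis by (rule canc_helper[OF q1 l r ks sd])
      qed
      have e2: "C*a'*u'^2 + D*b'*u' = k*(C*a*u^2 + D*b*u)"
      proof -
        have l: "C*a'*s'^(d-2)*t'^2 + D*b'*s'^(d-1)*t' = s'^d*(C*a'*u'^2 + D*b'*u')"
          unfolding tu' pw1[of s'] pw2[of s'] by (simp add: algebra_simps power2_eq_square)
        have r: "C*a*s^(d-2)*t^2 + D*b*s^(d-1)*t = s^d*(C*a*u^2 + D*b*u)"
          unfolding tu pw1[of s] pw2[of s] by (simp add: algebra_simps power2_eq_square)
        show ?thesis by (rule canc_helper[OF q2 l r ks sd])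
      qed
      have e3: "a'*u'*u'^(d-1) + D*b'*u'^(d-1) = k*(a*u*u^(d-1) + D*b*u^(d-1))"
      proof -
        have l: "a'*t'^d + D*b'*s'*t'^(d-1) = s'^d*(a'*u'*u'^(d-1) + D*b'*u'^(d-1))"
          unfolding tu' power_mult_distrib pw1[of s'] pw1[of u'] by (simp add: algebra_simps)
        have r: "a*t^d + D*b*s*t^(d-1) = s^d*(a*u*u^(d-1) + D*b*u^(d-1))"
          unfolding tu power_mult_distrib pw1[of s] pw1[of u] by (simp add: algebra_simps)
        show ?thesis by (rule canc_helper[OF q3 l r ks sd])
      qed
      have e4: "b'*u'*u'^(d-1) = k*(b*u*u^(d-1))"
      proof -
        have l: "b'*t'^d = s'^d*(b'*u'*u'^(d-1))"
          unfolding tu' power_mult_distrib pw1[of u'] by (simp add: algebra_simps)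
        have r: "b*t^d = s^d*(b*u*u^(d-1))"
          unfolding tu power_mult_distrib pw1[of u] by (simp add: algebra_simps)
        show ?thesis by (rule canc_helper[OF q4 l r ks sd])
      qed
      have uu: "u = u'"
        by (rule key[OF C2 D0 k x _ _ e0 e1 e2 e3 e4]) (use u u' in simp_all)
      have b'k: "b' = k*b" using e1 e0 uu by (simp add: algebra_simps)
      have "s' = (s'/s)*s" "t' = (s'/s)*t" using s tu tu' uu by simp_all
      moreover have "s'/s \<noteq> 0" using s s' by simp
      ultimately show ?thesis using pe2 e0 b'k k by metis
    qed
  qed
qed
lemma len2: "length x = 2 \<Longrightarrow> x = [x!0, x!1]"
  by (cases x; cases "tl x") auto

lemma nonzero_phi:
  fixes a b s t :: complex
  assumes d: "d \<ge> 3" and x: "a \<noteq> 0 \<or> b \<noteq> 0" and y: "s \<noteq> 0 \<or> t \<noteq> 0"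
  shows "nonzero_vec (phi_map d [a,b] [s,t])"
proof (cases "s = 0")
  case True
  then have "t \<noteq> 0" using y by simp
  have "a*t^d \<noteq> 0 \<or> b*t^d \<noteq> 0" using x \<open>t \<noteq> 0\<close> by simp
  thus ?thesis using True d by (auto simp: phi_map_def Let_def nonzero_vec_def)
next
  case False
  have "a*s^d \<noteq> 0 \<or> (a = 0 \<and> b*s^d \<noteq> 0)" using x False by auto
  thus ?thesis by (auto simp: phi_map_def Let_def nonzero_vec_def)
qed

theorem proposition4p3:
  fixes d :: nat
  assumes "d \<ge> 3"
  shows "(\<forall>x y. length x = 2 \<and> length y = 2 \<and> nonzero_vec x \<and> nonzero_vec y
            \<longrightarrow> nonzero_vec (phi_map d x y))
       \<and> (\<forall>x y x' y'. length x = 2 \<and> length y = 2 \<and> length x' = 2 \<and> length y' = 2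
            \<and> nonzero_vec x \<and> nonzero_vec y \<and> nonzero_vec x' \<and> nonzero_vec y'
            \<and> proj_eq (phi_map d x y) (phi_map d x' y')
            \<longrightarrow> proj_eq x x' \<and> proj_eq y y')"
proof (intro conjI allI impI)
  fix x y :: "complex list"
  assume h: "length x = 2 \<and> length y = 2 \<and> nonzero_vec x \<and> nonzero_vec y"
  then have ex: "x = [x!0, x!1]" and ey: "y = [y!0, y!1]" using len2 by blast+
  show "nonzero_vec (phi_map d x y)"
    using nonzero_phi[OF assms, of "x!0" "x!1" "y!0" "y!1"] h ex ey nz2 by metis
next
  fix x y x' y' :: "complex list"
  assume h: "length x = 2 \<and> length y = 2 \<and> length x' = 2 \<and> length y' = 2
            \<and> nonzero_vec x \<and> nonzero_vec y \<and> nonzero_vec x' \<and> nonzero_vec y'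
            \<and> proj_eq (phi_map d x y) (phi_map d x' y')"
  then have ex: "x = [x!0, x!1]" and ey: "y = [y!0, y!1]"
    and ex': "x' = [x'!0, x'!1]" and ey': "y' = [y'!0, y'!1]" using len2 by blast+
  from h obtain c where c: "c \<noteq> 0" "phi_map d x' y' = map (\<lambda>t. c*t) (phi_map d x y)"
    unfolding proj_eq_def by blast
  have "proj_eq [x!0, x!1] [x'!0, x'!1] \<and> proj_eq [y!0, y!1] [y'!0, y'!1]"
    apply (rule scalar_inj[OF assms _ _ _ _ c(1)])
    using h c(2) ex ey ex' ey' nz2 by metis+
  thus "proj_eq x x'" "proj_eq y y'" using ex ey ex' ey' by metis+
qed

end
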